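(* Let $(T(t))_{t\ge0}$ be a bounded $C_0$-semigroup on a Banach space $E$, and let $t_1,\dots,t_n>0$. Then $$E_{\mathrm{aap}}\cap\ker(T(t_1)-\mathrm{Id})\cdots(T(t_n)-\mathrm{Id})=\ker(T(t_1)-\mathrm{Id})+\cdots+\ker(T(t_n)-\mathrm{Id}).$$
   Context: $E_{\mathrm{aap}}$ is the set of asymptotically almost periodic vectors, i.e. those $x\in E$ whose orbit $\{T(t)x:t\ge0\}$ is relatively compact in $E$. *)

theory Defs
  imports "HOL-Analysis.Analysis"
begin

definition c0_semigroup :: "(real \<Rightarrow> 'a::banach \<Rightarrow> 'a) \<Rightarrow> bool" where
  "c0_semigroup T \<longleftrightarrow>
     (\<forall>t\<ge>0. bounded_linear (T t)) \<and>
     T 0 = id \<and>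
     (\<forall>s\<ge>0. \<forall>t\<ge>0. T (s + t) = T s \<circ> T t) \<and>
     (\<forall>x. ((\<lambda>t. T t x) \<longlongrightarrow> x) (at_right 0))"

definition bounded_semigroup :: "(real \<Rightarrow> 'a::real_normed_vector \<Rightarrow> 'a) \<Rightarrow> bool" where
  "bounded_semigroup T \<longleftrightarrow> (\<exists>M. \<forall>t\<ge>0. onorm (T t) \<le> M)"

definition E_aap :: "(real \<Rightarrow> 'a::real_normed_vector \<Rightarrow> 'a) \<Rightarrow> 'a set" where
  "E_aap T = {x. compact (closure ((\<lambda>t. T t x) ` {0..}))}"

fun prod_ops :: "(real \<Rightarrow> 'a::real_normed_vector \<Rightarrow> 'a) \<Rightarrow> (nat \<Rightarrow> real) \<Rightarrow> nat \<Rightarrow> 'a \<Rightarrow> 'a" where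
  "prod_ops T t 0 = id"
| "prod_ops T t (Suc n) = prod_ops T t n \<circ> (\<lambda>x. T (t n) x - x)"

definition kernel_of :: "('a \<Rightarrow> 'b::zero) \<Rightarrow> 'a set" where
  "kernel_of A = {x. A x = 0}"

end

theory Submission
  imports Defs
begin

lemma compact_closure_subset:
  fixes K :: "'a::metric_space set"
  assumes "compact K" "A \<subseteq> K" shows "compact (closure A)"
proof -
  have "closure A \<subseteq> K" using closure_minimal[OF assms(2) compact_imp_closed[OF assms(1)]] .
  then have "closure A = K \<inter> closure A" by blast
  then show ?thesis using compact_Int_closed[OF assms(1), of "closure A"] by simp
qed


lemma mazur:
  fixes K :: "'a::banach set"
  assumes "compact K"
  shows "compact (closure (convex hull K))"
proof -
  have "\<exists>k. finite k \<and> closure (convex hull K) \<subseteq> (\<Union>x\<in>k. ball x e)" if e: "e > 0" for e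
  proof -
    have e3: "e/3 > 0" using e by simp
    obtain F where F: "finite F" "K \<subseteq> (\<Union>x\<in>F. ball x (e/3))"
      using compact_eq_totally_bounded[THEN iffD1, OF assms, THEN conjunct2, rule_format, OF e3] by blast
    have cF: "compact (convex hull F)" using F(1) finite_imp_compact_convex_hull by blast
    obtain G where G: "finite G" "convex hull F \<subseteq> (\<Union>x\<in>G. ball x (e/3))"
      using compact_eq_totally_bounded[THEN iffD1, OF cF, THEN conjunct2, rule_format, OF e3] by blast
    let ?C = "(\<Union>x\<in>convex hull F. \<Union>y\<in>ball 0 (e/3). {x + y})"
    have cvx: "convex ?C" using convex_sums[of "convex hull F" "ball 0 (e/3)"] by simp
    have "K \<subseteq> ?C"
    proof
      fix y assume "y \<in> K"
      then obtain f where f: "f \<in> F" "dist f y < e/3" using F by auto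
      have "y = f + (y - f)" by simp
      moreover have "f \<in> convex hull F" using f(1) by (simp add: hull_inc)
      moreover have "y - f \<in> ball 0 (e/3)" using f(2) by (simp add: dist_norm norm_minus_commute)
      ultimately show "y \<in> ?C" by blast
    qed
    then have "convex hull K \<subseteq> ?C" using cvx by (simp add: hull_minimal)
    also have "?C \<subseteq> (\<Union>x\<in>G. cball x (2*e/3))"
    proof
      fix z assume "z \<in> ?C"
      then obtain a b where ab: "z = a + b" "a \<in> convex hull F" "norm b < e/3" by auto
      then obtain g where g: "g \<in> G" "dist g a < e/3" using G by auto
      have "dist g z \<le> dist g a + dist a z" by (rule dist_triangle)
      also have "dist a z = norm b" using ab by (simp add: dist_norm)
      finally have "dist g z \<le> 2*e/3" using g ab by simp
      then show "z \<in> (\<Union>x\<in>G. cball x (2*e/3))" using g by auto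
    qed
    finally have "closure (convex hull K) \<subseteq> (\<Union>x\<in>G. cball x (2*e/3))"
      using G(1) by (intro closure_minimal) (simp_all add: closed_UN)
    also have "\<dots> \<subseteq> (\<Union>x\<in>G. ball x e)"
      using e by (intro UN_mono) (auto simp: subset_cball)
    finally show ?thesis using G(1) by blast
  qed
  moreover have "complete (closure (convex hull K))"
    by (simp add: complete_eq_closed)
  ultimately show ?thesis by (subst compact_eq_totally_bounded) simp
qed

definition avg :: "(real \<Rightarrow> 'a \<Rightarrow> 'a::real_vector) \<Rightarrow> real \<Rightarrow> nat \<Rightarrow> 'a \<Rightarrow> 'a" where
  "avg T a N y = (1 / real (Suc N)) *\<^sub>R (\<Sum>k<Suc N. T (real k * a) y)"

context fixes T :: "real \<Rightarrow> 'a::banach \<Rightarrow> 'a" assumes c0: "c0_semigroup T" begin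

lemma bl: "s \<ge> 0 \<Longrightarrow> bounded_linear (T s)" using c0 unfolding c0_semigroup_def by blast
lemma Tlin: "s \<ge> 0 \<Longrightarrow> linear (T s)" using bl bounded_linear.linear by blast
lemma T0: "T 0 x = x" using c0 unfolding c0_semigroup_def by simp
lemma Tadd: "s \<ge> 0 \<Longrightarrow> u \<ge> 0 \<Longrightarrow> T (s + u) x = T s (T u x)"
  using c0 unfolding c0_semigroup_def by simp
lemma Tcomm: "s \<ge> 0 \<Longrightarrow> u \<ge> 0 \<Longrightarrow> T s (T u x) = T u (T s x)"
  using Tadd[of s u x] Tadd[of u s x] by (simp add: add.commute)
lemma Tdiff: "s \<ge> 0 \<Longrightarrow> T s (x - y) = T s x - T s y"
  using Tlin linear_diff by blast
lemma Tplus: "s \<ge> 0 \<Longrightarrow> T s (x + y) = T s x + T s y"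
  using Tlin linear_add by blast
lemma Tzero: "s \<ge> 0 \<Longrightarrow> T s 0 = 0"
  using Tlin linear_0 by blast
lemma Tright: "((\<lambda>h. T h x) \<longlongrightarrow> x) (at_right 0)"
  using c0 unfolding c0_semigroup_def by blast

end


context fixes T :: "real \<Rightarrow> 'a::banach \<Rightarrow> 'a"
  assumes c0: "c0_semigroup T" and bd: "bounded_semigroup T" begin

lemma Mbound: "\<exists>M>0. \<forall>s\<ge>0. \<forall>x. norm (T s x) \<le> M * norm x"
proof -
  obtain M0 where M0: "\<forall>t\<ge>0. onorm (T t) \<le> M0" using bd unfolding bounded_semigroup_def by blast
  have "norm (T s x) \<le> max M0 1 * norm x" if "s \<ge> 0" for s x
  proof -
    have "norm (T s x) \<le> onorm (T s) * norm x" using onorm bl[OF c0 that] by blast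
    also have "\<dots> \<le> max M0 1 * norm x" using M0 that by (intro mult_right_mono) auto
    finally show ?thesis .
  qed
  then show ?thesis by (intro exI[of _ "max M0 1"]) auto
qed

lemma orbit_cont: "continuous_on {0..} (\<lambda>s. T s x)"
proof -
  obtain M where M: "M > 0" "\<And>s y. s \<ge> 0 \<Longrightarrow> norm (T s y) \<le> M * norm y" using Mbound by blast
  show ?thesis unfolding continuous_on_iff
  proof (intro ballI allI impI)
    fix s e :: real assume s: "s \<in> {0..}" and e: "e > 0"
    have "eventually (\<lambda>h. dist (T h x) x < e / M) (at_right 0)"
      using Tright[OF c0] e M(1) tendsto_iff by (metis divide_pos_pos)
    then obtain b where b: "b > 0" "\<And>h. h > 0 \<Longrightarrow> h < b \<Longrightarrow> dist (T h x) x < e / M"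
      unfolding eventually_at_right_field by auto
    have "dist (T u x) (T s x) < e" if u: "u \<in> {0..}" "dist u s < b" for u
    proof (cases "u = s")
      case True then show ?thesis using e by simp
    next
      case False
      show ?thesis
      proof (cases "u > s")
        case True
        have "T u x = T s (T (u - s) x)" using Tadd[OF c0, of s "u - s" x] s True by simp
        then have "T u x - T s x = T s (T (u - s) x - x)" using Tdiff[OF c0] s by simp
        then have "dist (T u x) (T s x) \<le> M * dist (T (u - s) x) x"
          using M(2)[of s] s by (simp add: dist_norm)
        also have "\<dots> < M * (e / M)"
          using b(2)[of "u - s"] True u(2) M(1) by (simp add: dist_real_def pos_less_divide_eq mult.commute)
        finally show ?thesis using M(1) by simp
      next
        case False
        then have us: "u < s" using \<open>u \<noteq> s\<close> by simp
        have "T s x = T u (T (s - u) x)" using Tadd[OF c0, of u "s - u" x] u us by simp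
        then have "T u x - T s x = T u (x - T (s - u) x)" using Tdiff[OF c0] u by simp
        then have "dist (T u x) (T s x) \<le> M * dist (T (s - u) x) x"
          using M(2)[of u] u by (simp add: dist_norm norm_minus_commute)
        also have "\<dots> < M * (e / M)"
          using b(2)[of "s - u"] us u(2) M(1) by (simp add: dist_real_def pos_less_divide_eq mult.commute)
        finally show ?thesis using M(1) by simp
      qed
    qed
    then show "\<exists>d>0. \<forall>u\<in>{0..}. dist u s < d \<longrightarrow> dist (T u x) (T s x) < e" using b(1) by blast
  qed
qed


lemma Tka: "a \<ge> 0 \<Longrightarrow> T a y = y \<Longrightarrow> T (real k * a) y = y"
proof (induction k)
  case 0 then show ?case using T0[OF c0] by simp
next
  case (Suc k)
  have "T (real (Suc k) * a) y = T (a + real k * a) y" by (simp add: algebra_simps)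
  also have "\<dots> = T a (T (real k * a) y)" using Tadd[OF c0] Suc.prems by simp
  finally show ?case using Suc by simp
qed

lemma fixed_aap: assumes a: "a > 0" "T a y = y" shows "y \<in> E_aap T"
proof -
  have sub: "(\<lambda>t. T t y) ` {0..} \<subseteq> (\<lambda>s. T s y) ` {0..a}"
  proof
    fix z assume "z \<in> (\<lambda>t. T t y) ` {0..}"
    then obtain s where s: "s \<ge> 0" "z = T s y" by auto
    define k where "k = nat \<lfloor>s / a\<rfloor>"
    have fl: "real k = of_int \<lfloor>s / a\<rfloor>" using s a unfolding k_def by simp
    have h1: "real k \<le> s / a" "s / a < real k + 1" using fl by linarith+
    have "real k * a \<le> s / a * a" using h1 a by (intro mult_right_mono) auto
    then have k1: "real k * a \<le> s" using a by simp
    have "s / a * a < (real k + 1) * a" using h1 a by (intro mult_strict_right_mono) auto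
    then have k2: "s < real k * a + a" using a by (simp add: algebra_simps)
    define r where "r = s - real k * a"
    have r: "0 \<le> r" "r \<le> a" using k1 k2 unfolding r_def by auto
    have "T s y = T (r + real k * a) y" unfolding r_def by simp
    also have "\<dots> = T r (T (real k * a) y)" using Tadd[OF c0] r a by simp
    also have "\<dots> = T r y" using Tka a by simp
    finally show "z \<in> (\<lambda>s. T s y) ` {0..a}" using s r by auto
  qed
  have "compact ((\<lambda>s. T s y) ` {0..a})"
    by (rule compact_continuous_image[OF continuous_on_subset[OF orbit_cont]]) auto
  then show ?thesis unfolding E_aap_def mem_Collect_eq by (rule compact_closure_subset[OF _ sub])
qed

lemma aap_add: assumes "x \<in> E_aap T" "y \<in> E_aap T" shows "x + y \<in> E_aap T"
proof -
  let ?A = "closure ((\<lambda>t. T t x) ` {0..})" and ?B = "closure ((\<lambda>t. T t y) ` {0..})"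
  have "(\<lambda>t. T t (x + y)) ` {0..} \<subseteq> {a + b |a b. a \<in> ?A \<and> b \<in> ?B}"
  proof
    fix z assume "z \<in> (\<lambda>t. T t (x + y)) ` {0..}"
    then obtain s where s: "s \<ge> 0" "z = T s (x + y)" by auto
    then have "z = T s x + T s y" using Tplus[OF c0] by simp
    moreover have "T s x \<in> ?A" "T s y \<in> ?B" using s by (auto intro!: closure_subset[THEN subsetD])
    ultimately show "z \<in> {a + b |a b. a \<in> ?A \<and> b \<in> ?B}" by blast
  qed
  moreover have "compact {a + b |a b. a \<in> ?A \<and> b \<in> ?B}"
    using assms unfolding E_aap_def mem_Collect_eq by (intro compact_sums) auto
  ultimately show ?thesis unfolding E_aap_def mem_Collect_eq by (intro compact_closure_subset)
qed

lemma aap_diff: assumes "x \<in> E_aap T" "y \<in> E_aap T" shows "x - y \<in> E_aap T"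
proof -
  let ?A = "closure ((\<lambda>t. T t x) ` {0..})" and ?B = "closure ((\<lambda>t. T t y) ` {0..})"
  have "(\<lambda>t. T t (x - y)) ` {0..} \<subseteq> {a - b |a b. a \<in> ?A \<and> b \<in> ?B}"
  proof
    fix z assume "z \<in> (\<lambda>t. T t (x - y)) ` {0..}"
    then obtain s where s: "s \<ge> 0" "z = T s (x - y)" by auto
    then have "z = T s x - T s y" using Tdiff[OF c0] by simp
    moreover have "T s x \<in> ?A" "T s y \<in> ?B" using s by (auto intro!: closure_subset[THEN subsetD])
    ultimately show "z \<in> {a - b |a b. a \<in> ?A \<and> b \<in> ?B}" by blast
  qed
  moreover have "compact {a - b |a b. a \<in> ?A \<and> b \<in> ?B}"
    using assms unfolding E_aap_def mem_Collect_eq by (intro compact_differences) auto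
  ultimately show ?thesis unfolding E_aap_def mem_Collect_eq by (intro compact_closure_subset)
qed

lemma aap_zero: "0 \<in> E_aap T"
proof -
  have "(\<lambda>t. T t 0) ` {0..} \<subseteq> {0}" using Tzero[OF c0] by auto
  then show ?thesis unfolding E_aap_def mem_Collect_eq by (intro compact_closure_subset[of "{0}"]) auto
qed

lemma aap_sum: fixes x :: "nat \<Rightarrow> 'a" shows "(\<And>i. i < n \<Longrightarrow> x i \<in> E_aap T) \<Longrightarrow> (\<Sum>i<n. x i) \<in> E_aap T"
  by (induction n) (auto simp: aap_zero aap_add)


lemma prod_bl: "\<forall>i<n. t i \<ge> 0 \<Longrightarrow> bounded_linear (prod_ops T t n)"
proof (induction n)
  case 0 then show ?case by (simp add: id_def bounded_linear_ident)
next
  case (Suc n)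
  have D: "bounded_linear (\<lambda>x. T (t n) x - x)"
    using Suc.prems by (intro bounded_linear_sub bl[OF c0] bounded_linear_ident) auto
  have "bounded_linear (\<lambda>x. prod_ops T t n (T (t n) x - x))"
    using Suc by (intro bounded_linear_compose[OF _ D]) auto
  then show ?case by (simp add: o_def)
qed

lemma prod_T: "\<forall>i<n. t i \<ge> 0 \<Longrightarrow> s \<ge> 0 \<Longrightarrow> prod_ops T t n (T s y) = T s (prod_ops T t n y)"
proof (induction n arbitrary: y)
  case 0 then show ?case by simp
next
  case (Suc n)
  have "T (t n) (T s y) - T s y = T s (T (t n) y - y)"
    using Suc.prems Tcomm[OF c0, of s "t n" y] Tdiff[OF c0, of s] by simp
  then show ?case using Suc by simp
qed

lemma prod_kill: "\<forall>i<n. t i \<ge> 0 \<Longrightarrow> i < n \<Longrightarrow> T (t i) z = z \<Longrightarrow> prod_ops T t n z = 0"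
proof (induction n arbitrary: z)
  case 0 then show ?case by simp
next
  case (Suc n)
  show ?case
  proof (cases "i = n")
    case True
    have "T (t n) z - z = 0" using Suc.prems True by simp
    moreover have "prod_ops T t n 0 = 0"
      using prod_bl[of n t] Suc.prems bounded_linear.linear linear_0 by fastforce
    ultimately show ?thesis by simp
  next
    case False
    then have i: "i < n" using Suc.prems by simp
    have "T (t i) (T (t n) z - z) = T (t n) (T (t i) z) - T (t i) z"
      using Suc.prems i Tdiff[OF c0, of "t i"] Tcomm[OF c0, of "t i" "t n" z] by simp
    also have "\<dots> = T (t n) z - z" using Suc.prems by simp
    finally have "prod_ops T t n (T (t n) z - z) = 0" using Suc.IH[OF _ i] Suc.prems by simp
    then show ?thesis by simp
  qed
qed


lemma sup_dir:
  assumes "\<forall>i<n. t i > 0" "\<forall>i<n. T (t i) (xs i) = xs i"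
  shows "(\<Sum>i<n. xs i) \<in> E_aap T \<and> prod_ops T t n (\<Sum>i<n. xs i) = 0"
proof
  have "xs i \<in> E_aap T" if "i < n" for i using fixed_aap[of "t i" "xs i"] assms that by auto
  then show "(\<Sum>i<n. xs i) \<in> E_aap T" by (rule aap_sum)
  have t0: "\<forall>i<n. t i \<ge> 0" using assms(1) by (simp add: less_imp_le)
  have "linear (prod_ops T t n)" using prod_bl[OF t0] bounded_linear.linear by blast
  then have "prod_ops T t n (\<Sum>i<n. xs i) = (\<Sum>i<n. prod_ops T t n (xs i))" by (simp add: linear_sum)
  also have "\<dots> = 0" using prod_kill[OF t0] assms(2) by (intro sum.neutral) auto
  finally show "prod_ops T t n (\<Sum>i<n. xs i) = 0" .
qed

lemma avg_comm: assumes "bounded_linear L" "\<And>k. L (T (real k * a) y) = T (real k * a) (L y)"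
  shows "L (avg T a N y) = avg T a N (L y)"
proof -
  have l: "linear L" using assms(1) bounded_linear.linear by blast
  show ?thesis unfolding avg_def using assms(2) by (simp only: linear_scale[OF l] linear_sum[OF l])
qed

lemma avg_fixed: assumes "a \<ge> 0" "T a y = y" shows "avg T a N y = y"
proof -
  have "(\<Sum>k<Suc N. T (real k * a) y) = (\<Sum>k<Suc N. y)" using Tka assms by simp
  also have "\<dots> = real (Suc N) *\<^sub>R y" by (simp only: sum_constant_scaleR card_lessThan)
  finally show ?thesis unfolding avg_def by simp
qed

lemma avg_step: assumes "a \<ge> 0"
  shows "T a (avg T a N y) - avg T a N y = (1 / real (Suc N)) *\<^sub>R (T (real (Suc N) * a) y - y)"
proof -
  define f where "f k = T (real k * a) y" for k
  have l: "linear (T a)" using Tlin[OF c0] assms by blast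
  have "T a (f k) = f (Suc k)" for k
    using Tadd[OF c0, of a "real k * a" y] assms unfolding f_def by (simp add: algebra_simps)
  then have "T a (avg T a N y) = (1 / real (Suc N)) *\<^sub>R (\<Sum>k<Suc N. f (Suc k))"
    unfolding avg_def f_def[symmetric] by (simp only: linear_scale[OF l] linear_sum[OF l])
  moreover have "avg T a N y = (1 / real (Suc N)) *\<^sub>R (\<Sum>k<Suc N. f k)"
    unfolding avg_def f_def by simp
  moreover have "(\<Sum>k<Suc N. f (Suc k)) - (\<Sum>k<Suc N. f k) = f (Suc N) - f 0"
    using sum_lessThan_telescope[of f "Suc N"] by (simp add: sum_subtractf)
  moreover have "f 0 = y" unfolding f_def using T0[OF c0] by simp
  ultimately show ?thesis unfolding f_def by (simp add: scaleR_diff_right[symmetric])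
qed

lemma avg_hull: assumes "a \<ge> 0" shows "avg T a N y \<in> convex hull ((\<lambda>t. T t y) ` {0..})"
proof -
  have "avg T a N y = (\<Sum>k<Suc N. (1 / real (Suc N)) *\<^sub>R T (real k * a) y)"
    unfolding avg_def by (simp only: scaleR_sum_right)
  also have "\<dots> \<in> convex hull ((\<lambda>t. T t y) ` {0..})"
  proof (rule convex_sum)
    show "(\<Sum>i<Suc N. 1 / real (Suc N)) = 1" by simp
    show "T (real i * a) y \<in> convex hull ((\<lambda>t. T t y) ` {0..})" for i
      using assms by (intro hull_inc) auto
  qed auto
  finally show ?thesis .
qed


lemma sub_dir:
  "\<forall>i<n. t i > 0 \<Longrightarrow> x \<in> E_aap T \<Longrightarrow> prod_ops T t n x = 0 \<Longrightarrow>
   \<exists>xs. (\<forall>i<n. T (t i) (xs i) = xs i) \<and> x = (\<Sum>i<n. xs i)"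
proof (induction n arbitrary: x)
  case 0 then show ?case by simp
next
  case (Suc m)
  define a where "a = t m"
  have a: "a > 0" using Suc.prems(1) unfolding a_def by simp
  have t0: "\<forall>i<m. t i \<ge> 0" using Suc.prems(1) by (simp add: less_imp_le)
  define Q where "Q = prod_ops T t m"
  have Qbl: "bounded_linear Q" unfolding Q_def using prod_bl[OF t0] .
  have Ql: "linear Q" using Qbl bounded_linear.linear by blast
  have QT: "Q (T s y) = T s (Q y)" if "s \<ge> 0" for s y unfolding Q_def using prod_T[OF t0 that] .
  have "Q (T a x - x) = 0" using Suc.prems(3) unfolding Q_def a_def by simp
  then have hQ: "T a (Q x) = Q x" using QT[of a x] a linear_diff[OF Ql] by simp
  obtain M where M: "M > 0" "\<And>s y. s \<ge> 0 \<Longrightarrow> norm (T s y) \<le> M * norm y" using Mbound by blast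
  define K where "K = closure ((\<lambda>t. T t x) ` {0..})"
  have cK: "compact K" using Suc.prems(2) unfolding K_def E_aap_def by simp
  define C where "C = closure (convex hull K)"
  have cC: "compact C" unfolding C_def using mazur[OF cK] .
  have clC: "closed C" using compact_imp_closed[OF cC] .
  have hullC: "convex hull ((\<lambda>t. T t x) ` {0..}) \<subseteq> C"
  proof -
    have "(\<lambda>t. T t x) ` {0..} \<subseteq> K" unfolding K_def by (rule closure_subset)
    then have "convex hull ((\<lambda>t. T t x) ` {0..}) \<subseteq> convex hull K" by (rule hull_mono)
    also have "\<dots> \<subseteq> C" unfolding C_def by (rule closure_subset)
    finally show ?thesis .
  qed
  define f where "f N = avg T a N x" for N
  have fC: "f N \<in> C" for N unfolding f_def using avg_hull[of a N x] a hullC by auto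
  obtain p r where p: "p \<in> C" and r: "strict_mono r" and conv: "(f \<circ> r) \<longlonglongrightarrow> p"
    using compact_imp_seq_compact[OF cC] fC unfolding seq_compact_def by meson
  define g where "g N = T a (f N) - f N" for N
  have g0: "g \<longlonglongrightarrow> 0"
  proof (rule Lim_null_comparison)
    show "\<forall>\<^sub>F N in sequentially. norm (g N) \<le> (M * norm x + norm x) * inverse (real (Suc N))"
    proof (intro always_eventually allI)
      fix N
      have "g N = (1 / real (Suc N)) *\<^sub>R (T (real (Suc N) * a) x - x)"
        unfolding g_def f_def using avg_step a by simp
      then have "norm (g N) = inverse (real (Suc N)) * norm (T (real (Suc N) * a) x - x)"
        by (simp add: divide_inverse)
      also have "\<dots> \<le> inverse (real (Suc N)) * (M * norm x + norm x)"
      proof (rule mult_left_mono)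
        have "norm (T (real (Suc N) * a) x - x) \<le> norm (T (real (Suc N) * a) x) + norm x"
          by (rule norm_triangle_ineq4)
        also have "\<dots> \<le> M * norm x + norm x" using M(2)[of "real (Suc N) * a" x] a by simp
        finally show "norm (T (real (Suc N) * a) x - x) \<le> M * norm x + norm x" .
      qed simp
      finally show "norm (g N) \<le> (M * norm x + norm x) * inverse (real (Suc N))"
        by (simp add: mult.commute)
    qed
    show "(\<lambda>N. (M * norm x + norm x) * inverse (real (Suc N))) \<longlonglongrightarrow> 0"
      using tendsto_mult[OF tendsto_const LIMSEQ_inverse_real_of_nat, of "M * norm x + norm x"] by simp
  qed
  have Tap: "T a p = p"
  proof -
    have "(g \<circ> r) \<longlonglongrightarrow> 0" using LIMSEQ_subseq_LIMSEQ[OF g0 r] .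
    moreover have "(g \<circ> r) \<longlonglongrightarrow> T a p - p"
    proof -
      have "(\<lambda>j. T a ((f \<circ> r) j)) \<longlonglongrightarrow> T a p"
        using bounded_linear.tendsto[OF bl[OF c0] conv] a by simp
      from tendsto_diff[OF this conv] show ?thesis unfolding g_def o_def by simp
    qed
    ultimately have "T a p - p = 0" using LIMSEQ_unique by blast
    then show ?thesis by simp
  qed
  have QF: "Q (f N) = Q x" for N
  proof -
    have "Q (f N) = avg T a N (Q x)" unfolding f_def
      by (rule avg_comm[OF Qbl]) (use QT a in simp)
    also have "\<dots> = Q x" using avg_fixed[of a "Q x" N] a hQ by simp
    finally show ?thesis .
  qed
  have Qp: "Q p = Q x"
  proof -
    have "(\<lambda>j. Q ((f \<circ> r) j)) \<longlonglongrightarrow> Q p" using bounded_linear.tendsto[OF Qbl conv] .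
    moreover have "(\<lambda>j. Q ((f \<circ> r) j)) = (\<lambda>j. Q x)" using QF by (simp add: o_def)
    ultimately show ?thesis using LIMSEQ_unique tendsto_const by metis
  qed
  have orbp: "(\<lambda>s. T s p) ` {0..} \<subseteq> C"
  proof
    fix z assume "z \<in> (\<lambda>s. T s p) ` {0..}"
    then obtain s where s: "s \<ge> 0" "z = T s p" by auto
    have lim: "(\<lambda>j. T s ((f \<circ> r) j)) \<longlonglongrightarrow> T s p" using bounded_linear.tendsto[OF bl[OF c0 s(1)] conv] .
    have "T s (f N) \<in> C" for N
    proof -
      have "T s (f N) = avg T a N (T s x)" unfolding f_def
        by (rule avg_comm[OF bl[OF c0 s(1)]]) (use Tcomm[OF c0] s a in simp)
      also have "\<dots> \<in> convex hull ((\<lambda>t. T t (T s x)) ` {0..})" using avg_hull a by simp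
      also have "\<dots> \<subseteq> convex hull ((\<lambda>t. T t x) ` {0..})"
      proof (rule hull_mono)
        show "(\<lambda>t. T t (T s x)) ` {0..} \<subseteq> (\<lambda>t. T t x) ` {0..}"
        proof
          fix w assume "w \<in> (\<lambda>t. T t (T s x)) ` {0..}"
          then obtain u where u: "u \<ge> 0" "w = T u (T s x)" by auto
          then have "w = T (u + s) x" using Tadd[OF c0, of u s x] s by simp
          then show "w \<in> (\<lambda>t. T t x) ` {0..}" using u s by auto
        qed
      qed
      finally show ?thesis using hullC by blast
    qed
    then have "\<And>j. T s ((f \<circ> r) j) \<in> C" by simp
    from closed_sequentially[OF clC this lim] show "z \<in> C" using s by simp
  qed
  have paap: "p \<in> E_aap T" unfolding E_aap_def mem_Collect_eq
    by (rule compact_closure_subset[OF cC orbp])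
  have "x - p \<in> E_aap T" using aap_diff Suc.prems(2) paap by blast
  moreover have "prod_ops T t m (x - p) = 0"
    using Qp linear_diff[OF Ql] unfolding Q_def by simp
  moreover have "\<forall>i<m. t i > 0" using Suc.prems(1) by simp
  ultimately obtain xs where xs: "\<forall>i<m. T (t i) (xs i) = xs i" "x - p = (\<Sum>i<m. xs i)"
    using Suc.IH by blast
  define ys where "ys = xs(m := p)"
  have "(\<Sum>i<Suc m. ys i) = (\<Sum>i<m. ys i) + p" unfolding ys_def by simp
  also have "(\<Sum>i<m. ys i) = (\<Sum>i<m. xs i)" unfolding ys_def by (intro sum.cong) auto
  finally have "x = (\<Sum>i<Suc m. ys i)" using xs(2) by (simp add: algebra_simps)
  moreover have "\<forall>i<Suc m. T (t i) (ys i) = ys i"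
    using xs(1) Tap unfolding ys_def a_def by (auto simp: less_Suc_eq)
  ultimately show ?case by blast
qed

end


theorem lemma2p3:
  fixes T :: "real \<Rightarrow> 'a::banach \<Rightarrow> 'a" and t :: "nat \<Rightarrow> real" and n :: nat
  assumes "c0_semigroup T" and "bounded_semigroup T"
    and "\<forall>i<n. t i > 0"
  shows "E_aap T \<inter> kernel_of (prod_ops T t n) =
    {y. \<exists>x. (\<forall>i<n. x i \<in> kernel_of (\<lambda>z. T (t i) z - z)) \<and> y = (\<Sum>i<n. x i)}"
proof
  show "E_aap T \<inter> kernel_of (prod_ops T t n) \<subseteq>
    {y. \<exists>x. (\<forall>i<n. x i \<in> kernel_of (\<lambda>z. T (t i) z - z)) \<and> y = (\<Sum>i<n. x i)}"
  proof
    fix y assume "y \<in> E_aap T \<inter> kernel_of (prod_ops T t n)"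
    then have "y \<in> E_aap T" "prod_ops T t n y = 0" unfolding kernel_of_def by auto
    then obtain xs where "\<forall>i<n. T (t i) (xs i) = xs i" "y = (\<Sum>i<n. xs i)"
      using sub_dir[OF assms(1,2,3)] by blast
    then show "y \<in> {y. \<exists>x. (\<forall>i<n. x i \<in> kernel_of (\<lambda>z. T (t i) z - z)) \<and> y = (\<Sum>i<n. x i)}"
      unfolding kernel_of_def by auto
  qed
  show "{y. \<exists>x. (\<forall>i<n. x i \<in> kernel_of (\<lambda>z. T (t i) z - z)) \<and> y = (\<Sum>i<n. x i)}
    \<subseteq> E_aap T \<inter> kernel_of (prod_ops T t n)"
  proof
    fix y assume "y \<in> {y. \<exists>x. (\<forall>i<n. x i \<in> kernel_of (\<lambda>z. T (t i) z - z)) \<and> y = (\<Sum>i<n. x i)}"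
    then obtain xs where xs: "\<forall>i<n. T (t i) (xs i) = xs i" "y = (\<Sum>i<n. xs i)"
      unfolding kernel_of_def by auto
    from sup_dir[OF assms(1,2,3) xs(1)] xs(2)
    show "y \<in> E_aap T \<inter> kernel_of (prod_ops T t n)" unfolding kernel_of_def by auto
  qed
qed

end
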